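(* Let $A,B,C$ be non-empty sets, $I$ a non-empty index set, $\{V_i\}_{i\in I}\subseteq\mathcal R(A)$, $\{W_i\}_{i\in I}\subseteq\mathcal R(B)$, $\{X_i\}_{i\in I}\subseteq\mathcal R(C)$, $Z\in\mathcal R(A,B)$ and $Y\in\mathcal R(B,C)$. If $R\in\mathcal R(A,B)$ is a solution to $WL^{2\text{-}3}(A,B,I,V_i,W_i,Z)$ and $S\in\mathcal R(B,C)$ is a solution to $WL^{2\text{-}3}(B,C,I,W_i,X_i,Y)$, then $R\circ S$ is a solution to $WL^{2\text{-}3}(A,C,I,V_i,X_i,Z\circ Y)$.
   Context: $\mathcal L=(L,\wedge,\vee,\otimes,\to,0,1)$ is a complete residuated lattice. For non-empty sets $X,Y$, $\mathcal R(X,Y)$ is the set of fuzzy relations $X\times Y\to L$, $\mathcal R(X)=\mathcal R(X,X)$, ordered pointwise; $R^{-1}(y,x)=R(x,y)$; $(R\circ S)(x,t)=\bigvee_{y}R(x,y)\otimes S(y,t)$. For non-empty sets $P,Q$, index set $I$, $\{V_i\}\subseteq\mathcal R(P)$, $\{W_i\}\subseteq\mathcal R(Q)$, $Z\in\mathcal R(P,Q)$, the system $WL^{2\text{-}3}(P,Q,I,V_i,W_i,Z)$ in the unknown $U\in\mathcal R(P,Q)$ consists of $U^{-1}\circ V_i\le W_i\circ U^{-1}$ and $U\circ W_i\le V_i\circ U$ for all $i\in I$, together with $U\le Z$. *)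

theory Defs
  imports Main
begin

class complete_residuated_lattice = complete_lattice +
  fixes tensor :: "'a \<Rightarrow> 'a \<Rightarrow> 'a" (infixl "\<otimes>" 70)
    and resid :: "'a \<Rightarrow> 'a \<Rightarrow> 'a" (infixr "\<rightarrow>\<^sub>r" 60)
  assumes tensor_assoc: "(x \<otimes> y) \<otimes> z = x \<otimes> (y \<otimes> z)"
    and tensor_commute: "x \<otimes> y = y \<otimes> x"
    and tensor_top: "x \<otimes> top = x"
    and residuation: "x \<otimes> y \<le> z \<longleftrightarrow> x \<le> y \<rightarrow>\<^sub>r z"

type_synonym ('x, 'y, 'l) frel = "'x \<Rightarrow> 'y \<Rightarrow> 'l"

definition conv :: "('x, 'y, 'l) frel \<Rightarrow> ('y, 'x, 'l) frel" where
  "conv R = (\<lambda>y x. R x y)"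

definition rcomp :: "('x, 'y, 'l::complete_residuated_lattice) frel \<Rightarrow> ('y, 't, 'l) frel \<Rightarrow> ('x, 't, 'l) frel"
  (infixl "\<circ>\<^sub>f" 75) where
  "rcomp R S = (\<lambda>x t. SUP y. R x y \<otimes> S y t)"

definition WL23_solution ::
  "'i set \<Rightarrow> ('i \<Rightarrow> ('p, 'p, 'l::complete_residuated_lattice) frel) \<Rightarrow> ('i \<Rightarrow> ('q, 'q, 'l) frel)
    \<Rightarrow> ('p, 'q, 'l) frel \<Rightarrow> ('p, 'q, 'l) frel \<Rightarrow> bool" where
  "WL23_solution I V W Z U \<longleftrightarrow>
     (\<forall>i\<in>I. conv U \<circ>\<^sub>f V i \<le> W i \<circ>\<^sub>f conv U \<and> U \<circ>\<^sub>f W i \<le> V i \<circ>\<^sub>f U) \<and> U \<le> Z"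

end

theory Submission
  imports Defs
begin

context complete_residuated_lattice
begin

lemma tensor_mono: "a \<le> b \<Longrightarrow> c \<le> d \<Longrightarrow> a \<otimes> c \<le> b \<otimes> d"
proof -
  assume ab: "a \<le> b" and cd: "c \<le> d"
  have "b \<otimes> c \<le> b \<otimes> d" 
  proof -
    have "d \<otimes> b \<le> d \<otimes> b" by simp
    hence "d \<le> b \<rightarrow>\<^sub>r (d \<otimes> b)" using residuation by blast
    hence "c \<le> b \<rightarrow>\<^sub>r (d \<otimes> b)" using cd by (rule order_trans[rotated])
    hence "c \<otimes> b \<le> d \<otimes> b" using residuation by blast
    thus ?thesis by (simp add: tensor_commute)
  qed
  moreover have "a \<otimes> c \<le> b \<otimes> c"
  proof -
    have "b \<le> c \<rightarrow>\<^sub>r (b \<otimes> c)" using residuation by blast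
    hence "a \<le> c \<rightarrow>\<^sub>r (b \<otimes> c)" using ab by (rule order_trans[rotated])
    thus ?thesis using residuation by blast
  qed
  ultimately show ?thesis by (rule order_trans[rotated])
qed

lemma tensor_SUP_right: "(SUP y. f y) \<otimes> c = (SUP y. f y \<otimes> c)"
proof (rule order.antisym)
  have "\<And>y. f y \<le> c \<rightarrow>\<^sub>r (SUP y. f y \<otimes> c)"
    using residuation by (metis SUP_upper UNIV_I)
  hence "(SUP y. f y) \<le> c \<rightarrow>\<^sub>r (SUP y. f y \<otimes> c)" by (rule SUP_least)
  thus "(SUP y. f y) \<otimes> c \<le> (SUP y. f y \<otimes> c)" using residuation by blast
next
  show "(SUP y. f y \<otimes> c) \<le> (SUP y. f y) \<otimes> c"
    by (rule SUP_least, rule tensor_mono, auto intro: SUP_upper)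
qed

lemma tensor_SUP_left: "c \<otimes> (SUP y. f y) = (SUP y. c \<otimes> f y)"
  using tensor_SUP_right[of f c] by (simp add: tensor_commute)

end

lemma rcomp_assoc: "(R \<circ>\<^sub>f S) \<circ>\<^sub>f T = R \<circ>\<^sub>f (S \<circ>\<^sub>f T)"
proof -
  have "\<And>x t. (SUP z. (SUP y. R x y \<otimes> S y z) \<otimes> T z t) = (SUP y. R x y \<otimes> (SUP z. S y z \<otimes> T z t))"
  proof -
    fix x t
    have "(SUP z. (SUP y. R x y \<otimes> S y z) \<otimes> T z t) = (SUP z. SUP y. R x y \<otimes> S y z \<otimes> T z t)"
      by (simp only: tensor_SUP_right)
    also have "\<dots> = (SUP y. SUP z. R x y \<otimes> S y z \<otimes> T z t)" by (rule SUP_commute)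
    also have "\<dots> = (SUP y. R x y \<otimes> (SUP z. S y z \<otimes> T z t))"
      by (simp only: tensor_SUP_left tensor_assoc)
    finally show "?thesis x t" .
  qed
  thus ?thesis unfolding rcomp_def by (intro ext) blast
qed

lemma conv_rcomp: "conv (R \<circ>\<^sub>f S) = conv S \<circ>\<^sub>f conv R"
  unfolding conv_def rcomp_def by (auto simp: tensor_commute)

lemma rcomp_mono: "R \<le> R' \<Longrightarrow> S \<le> S' \<Longrightarrow> R \<circ>\<^sub>f S \<le> R' \<circ>\<^sub>f S'"
  unfolding rcomp_def le_fun_def
  by (intro allI SUP_mono) (blast intro: tensor_mono)

theorem proposition4p3:
  fixes I :: "'i set"
    and V :: "'i \<Rightarrow> ('a, 'a, 'l::complete_residuated_lattice) frel"
    and W :: "'i \<Rightarrow> ('b, 'b, 'l) frel"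
    and X :: "'i \<Rightarrow> ('c, 'c, 'l) frel"
    and Z R :: "('a, 'b, 'l) frel"
    and Y S :: "('b, 'c, 'l) frel"
  assumes "I \<noteq> {}"
    and "WL23_solution I V W Z R"
    and "WL23_solution I W X Y S"
  shows "WL23_solution I V X (Z \<circ>\<^sub>f Y) (R \<circ>\<^sub>f S)"
  unfolding WL23_solution_def
proof (intro conjI ballI)
  fix i assume i: "i \<in> I"
  have r1: "conv R \<circ>\<^sub>f V i \<le> W i \<circ>\<^sub>f conv R" and r2: "R \<circ>\<^sub>f W i \<le> V i \<circ>\<^sub>f R"
    using assms(2) i unfolding WL23_solution_def by auto
  have s1: "conv S \<circ>\<^sub>f W i \<le> X i \<circ>\<^sub>f conv S" and s2: "S \<circ>\<^sub>f X i \<le> W i \<circ>\<^sub>f S"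
    using assms(3) i unfolding WL23_solution_def by auto
  have "conv (R \<circ>\<^sub>f S) \<circ>\<^sub>f V i = conv S \<circ>\<^sub>f (conv R \<circ>\<^sub>f V i)"
    by (simp add: conv_rcomp rcomp_assoc)
  also have "\<dots> \<le> conv S \<circ>\<^sub>f (W i \<circ>\<^sub>f conv R)" by (rule rcomp_mono[OF order_refl r1])
  also have "\<dots> = (conv S \<circ>\<^sub>f W i) \<circ>\<^sub>f conv R" by (simp add: rcomp_assoc)
  also have "\<dots> \<le> (X i \<circ>\<^sub>f conv S) \<circ>\<^sub>f conv R" by (rule rcomp_mono[OF s1 order_refl])
  also have "\<dots> = X i \<circ>\<^sub>f conv (R \<circ>\<^sub>f S)" by (simp add: conv_rcomp rcomp_assoc)
  finally show "conv (R \<circ>\<^sub>f S) \<circ>\<^sub>f V i \<le> X i \<circ>\<^sub>f conv (R \<circ>\<^sub>f S)" .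
  have "R \<circ>\<^sub>f S \<circ>\<^sub>f X i = R \<circ>\<^sub>f (S \<circ>\<^sub>f X i)" by (simp add: rcomp_assoc)
  also have "\<dots> \<le> R \<circ>\<^sub>f (W i \<circ>\<^sub>f S)" by (rule rcomp_mono[OF order_refl s2])
  also have "\<dots> = (R \<circ>\<^sub>f W i) \<circ>\<^sub>f S" by (simp add: rcomp_assoc)
  also have "\<dots> \<le> (V i \<circ>\<^sub>f R) \<circ>\<^sub>f S" by (rule rcomp_mono[OF r2 order_refl])
  also have "\<dots> = V i \<circ>\<^sub>f (R \<circ>\<^sub>f S)" by (simp add: rcomp_assoc)
  finally show "R \<circ>\<^sub>f S \<circ>\<^sub>f X i \<le> V i \<circ>\<^sub>f (R \<circ>\<^sub>f S)" .
next
  show "R \<circ>\<^sub>f S \<le> Z \<circ>\<^sub>f Y" using assms(2,3) unfolding WL23_solution_def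
    by (auto intro: rcomp_mono)
qed

end
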